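(* For any coprime $r>1$ and $0<a<r$, on the Danilov resolution of $\frac1r(1,a,r-a)$ one has $R_1=D_X-E_1$, i.e. $R_1=\sum_{i=0}^r e_1^*(p_i)D_i$.
   Context: Notation: for integers $s$ and $t>0$, $\langle s\rangle_t$ is the least non-negative integer congruent to $s$ modulo $t$. A pair of integers $(r,a)$ is admissible if $r\ge1$, $0\le a<r$, $\gcd(r,a)=1$ (so $a=0$ only for $r=1$). For admissible $(r,a)$ put $N(r,a)=\mathbb Z^3+\mathbb Z\cdot\frac1r(1,a,r-a)\subset\mathbb Q^3$; $e_1,e_2,e_3$ is the standard basis, $e_j^*$ the $j$-th coordinate function, and $\Delta(r,a)$ the cone spanned by $e_1,e_2,e_3$. Let $b$ be an inverse of $a$ modulo $r$ and $p_i=\frac1r(\langle -ib\rangle_r,r-i,i)$, $i=0,\dots,r$ (so $p_0=e_2$, $p_r=e_3$, $p_{r-a}=\frac1r(1,a,r-a)$). For $r>1$ let $(r_L,a_L)=(r-a,\langle r\rangle_{r-a})$, $(r_R,a_R)=(a,\langle -r\rangle_a)$; there are lattice isomorphisms $L:N(r_L,a_L)\to N(r,a)$, $R:N(r_R,a_R)\to N(r,a)$ with $L(e_1)=e_1$, $L(e_2)=e_2$, $L(e_3)=p_{r-a}$, $R(e_1)=e_1$, $R(e_2)=p_{r-a}$, $R(e_3)=e_3$. The Danilov fan $\Sigma(r,a)$ is defined recursively: $\Sigma(1,0)$ is $\Delta(1,0)$ with its faces; for $r>1$, $\Sigma(r,a)$ consists of the cone spanned by $e_2,e_3,p_{r-a}$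 with its faces, together with $L(\Sigma(r_L,a_L))$ and $R(\Sigma(r_R,a_R))$. The Danilov resolution $Y$ is the smooth toric variety of $\Sigma(r,a)$, with torus $T$; its rays are spanned by $e_1,p_0,\dots,p_r$; $D_i$ is the $T$-invariant prime divisor of the ray through $p_i$ and $E_j$ that of $e_j$. The permutation $\tau(r,a,\cdot)$ of $\{0,\dots,r-1\}$: if $a\in\{1,r-1\}$, $\tau(r,a,i)=\langle ai-1\rangle_r$; otherwise $\tau(r,a,i)=\tau(r-a,\langle r\rangle_{r-a},\langle i\rangle_{r-a})$ for $i\ge a$ and $\tau(r,a,i)=(r-a)+\tau(a,\langle -r\rangle_a,i)$ for $i<a$. With indices mod $r$, define $Z_i=\sum_{k=\tau(r,a,i)+1}^{r}D_k$ ($i=0,\dots,r-1$). Define the $\mathbb Q$-divisors $D_X=E_1+\sum_{i=0}^r e_1^*(p_i)D_i$, $D_Z=\sum_{i=0}^r e_3^*(p_i)D_i$, and let $R_0,\dots,R_{r-1}$ be the unique $\mathbb Q$-divisors with $R_0=0$ and $Z_i=D_Z+R_i-R_{i-a}$ for all $i$ (indices mod $r$). *)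

theory Defs
  imports Complex_Main "HOL-Library.Function_Algebras"
begin

text \<open>T-invariant prime divisors of the Danilov resolution Y: the rays are spanned by
  e_1 (divisor E_1) and p_0, ..., p_r (divisors D_0, ..., D_r).\<close>
datatype ray = RayE1 | RayD nat

text \<open>A T-invariant Q-divisor on Y: its coefficient at each T-invariant prime divisor.
  Only the rays RayE1 and RayD k with k \<le> r exist; coefficients elsewhere must vanish.\<close>
type_synonym qdiv = "ray \<Rightarrow> rat"

definition is_qdiv :: "nat \<Rightarrow> qdiv \<Rightarrow> bool" where
  "is_qdiv r X \<longleftrightarrow> (\<forall>k>r. X (RayD k) = 0)"

definition Ddiv :: "nat \<Rightarrow> qdiv" where
  "Ddiv k = (\<lambda>\<rho>. if \<rho> = RayD k then 1 else 0)"

definition E1div :: qdiv where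
  "E1div = (\<lambda>\<rho>. if \<rho> = RayE1 then 1 else 0)"

definition sdiv :: "rat \<Rightarrow> qdiv \<Rightarrow> qdiv" where
  "sdiv c X = (\<lambda>\<rho>. c * X \<rho>)"

definition binv :: "nat \<Rightarrow> nat \<Rightarrow> nat" where
  "binv r a = (SOME b. (a * b) mod r = 1 mod r)"

text \<open>e_1^*(p_i) = <-ib>_r / r  and  e_3^*(p_i) = i / r.\<close>
definition e1p :: "nat \<Rightarrow> nat \<Rightarrow> nat \<Rightarrow> rat" where
  "e1p r a i = of_int ((- int i * int (binv r a)) mod int r) / of_nat r"

definition e3p :: "nat \<Rightarrow> nat \<Rightarrow> rat" where
  "e3p r i = of_nat i / of_nat r"

text \<open>The permutation tau(r,a,.). The extra guards a = 0 / a \<ge> r only matter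
  for non-admissible inputs (they make the recursion total).\<close>
function tau :: "nat \<Rightarrow> nat \<Rightarrow> nat \<Rightarrow> nat" where
  "tau r a i =
     (if a = 1 \<or> a = r - 1 \<or> a = 0 \<or> r \<le> a
      then nat ((int a * int i - 1) mod int r)
      else if a \<le> i then tau (r - a) (r mod (r - a)) (i mod (r - a))
      else (r - a) + tau a (nat ((- int r) mod int a)) i)"
  by pat_completeness auto
termination
  by (relation "measure (\<lambda>(r, a, i). r)") auto

definition Zdiv :: "nat \<Rightarrow> nat \<Rightarrow> nat \<Rightarrow> qdiv" where
  "Zdiv r a i = (\<Sum>k\<in>{tau r a i + 1..r}. Ddiv k)"

definition DXdiv :: "nat \<Rightarrow> nat \<Rightarrow> qdiv" where
  "DXdiv r a = E1div + (\<Sum>i\<in>{0..r}. sdiv (e1p r a i) (Ddiv i))"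

definition DZdiv :: "nat \<Rightarrow> nat \<Rightarrow> qdiv" where
  "DZdiv r a = (\<Sum>i\<in>{0..r}. sdiv (e3p r i) (Ddiv i))"

text \<open>R = (R_0, ..., R_{r-1}) (stored as a function on nat, zero from index r on)
  satisfies R_0 = 0 and Z_i = D_Z + R_i - R_{i-a} for all i mod r.\<close>
definition Rcond :: "nat \<Rightarrow> nat \<Rightarrow> (nat \<Rightarrow> qdiv) \<Rightarrow> bool" where
  "Rcond r a R \<longleftrightarrow> R 0 = 0 \<and> (\<forall>i\<ge>r. R i = 0) \<and> (\<forall>i<r. is_qdiv r (R i)) \<and>
     (\<forall>i<r. Zdiv r a i = DZdiv r a + R i - R ((i + r - a) mod r))"

end

theory Submission
  imports Defs
begin


definition G :: "int \<Rightarrow> int \<Rightarrow> int \<Rightarrow> int" where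
  "G q p t = - ((- t * p) div q)"

definition Dl :: "int \<Rightarrow> int \<Rightarrow> int \<Rightarrow> int" where
  "Dl q p t = G q p (t + 1) - G q p t"

lemma G_char:
  assumes "q > 0"
  shows "G q p t = n \<longleftrightarrow> (n - 1) * q < t * p \<and> t * p \<le> n * q"
proof -
  have e0: "(- t * p) div q = - n \<longleftrightarrow> (-n) * q \<le> - t * p \<and> - t * p < (-n) * q + q"
  proof
    assume h: "(- t * p) div q = - n"
    have e: "- t * p = q * (- n) + (- t * p) mod q" using h by (metis div_mult_mod_eq mult.commute)
    have "0 \<le> (- t * p) mod q" "(- t * p) mod q < q" using assms by auto
    with e show "(-n) * q \<le> - t * p \<and> - t * p < (-n) * q + q" by (simp add: algebra_simps)
  next
    assume h: "(-n) * q \<le> - t * p \<and> - t * p < (-n) * q + q"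
    show "(- t * p) div q = - n"
      by (rule int_div_pos_eq[where r = "- t * p + n * q"]) (use h in \<open>simp_all add: algebra_simps\<close>)
  qed
  have e1: "G q p t = n \<longleftrightarrow> (- t * p) div q = - n" unfolding G_def by auto
  have e2: "((-n) * q \<le> - t * p \<and> - t * p < (-n) * q + q) \<longleftrightarrow> ((n - 1) * q < t * p \<and> t * p \<le> n * q)"
    by (auto simp: algebra_simps)
  show ?thesis by (simp only: e1 e0 e2)
qed

lemma G_period: "q > 0 \<Longrightarrow> G q p (t + k * q) = G q p t + k * p"
proof -
  assume q: "q > 0"
  have "- (t + k * q) * p = (- t * p) + (- k * p) * q" by (simp add: algebra_simps)
  then have "(- (t + k * q) * p) div q = (- t * p) div q + (- k * p)" using q div_mult_self1[of q "- t * p" "- k * p"] by simp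
  then show ?thesis unfolding G_def by simp
qed

lemma Dl_period: "q > 0 \<Longrightarrow> Dl q p (t + k * q) = Dl q p t"
  unfolding Dl_def using G_period[of q p "t + 1" k] G_period[of q p t k]
  by (simp add: algebra_simps)

lemma farey_no_int:
  fixes q q' p p' j n :: int
  assumes "q > 0" "q' > 0" "p' * q - p * q' = 1" "0 < j" "j < q + q'"
    "j * p < n * q" "n * q' < j * p'"
  shows False
proof -
  have h1: "q' * (n * q - j * p) \<ge> q'" using assms by (simp add: mult_le_cancel_left1) 
  have h2: "q * (j * p' - n * q') \<ge> q" using assms by (simp add: mult_le_cancel_left1)
  have "q' * (n * q - j * p) + q * (j * p' - n * q') = j * (p' * q - p * q')"
    by (simp add: algebra_simps)
  then have "q' * (n * q - j * p) + q * (j * p' - n * q') = j" using assms by simp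
  with h1 h2 assms show False by linarith
qed

lemma farey_coprime:
  fixes q p q' p' :: int
  assumes "p' * q - p * q' = 1"
  shows "coprime q p" "coprime q' p'"
proof -
  have "gcd q p dvd 1" using assms by (metis dvd_diff dvd_mult gcd_dvd1 gcd_dvd2 mult.commute)
  then show "coprime q p" by (simp add: coprime_iff_gcd_eq_1)
  have "gcd q' p' dvd 1" using assms by (metis dvd_diff dvd_mult gcd_dvd1 gcd_dvd2 mult.commute)
  then show "coprime q' p'" by (simp add: coprime_iff_gcd_eq_1)
qed

lemma farey_G:
  fixes q p q' p' j :: int
  assumes q: "q > 0" and q': "q' > 0" and f: "p' * q - p * q' = 1"
    and j: "0 \<le> j" "j < q + q'" and nd: "j = 0 \<or> \<not> q dvd j"
  shows "G q p j = G q' p' j"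
proof (cases "j = 0")
  case True then show ?thesis by (simp add: G_def)
next
  case False
  with j have jp: "j > 0" by simp
  from nd False have nd': "\<not> q dvd j" by simp
  define n where "n = G q p j"
  have c: "(n - 1) * q < j * p" "j * p \<le> n * q" using G_char[OF q, of p j n] n_def by auto
  have "j * p \<noteq> n * q"
  proof
    assume "j * p = n * q"
    then have "q dvd j * p" by (metis dvd_triv_right)
    then have "q dvd j" using farey_coprime(1)[OF f] by (simp add: coprime_dvd_mult_left_iff)
    with nd' show False by simp
  qed
  with c have c2: "j * p < n * q" by simp
  have u: "j * p' \<le> n * q'"
  proof (rule ccontr)
    assume "\<not> ?thesis"
    then have "n * q' < j * p'" by simp
    from farey_no_int[OF q q' f jp j(2) c2 this] show False .
  qed
  have l: "(n - 1) * q' < j * p'"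
  proof (rule ccontr)
    assume "\<not> ?thesis"
    then have h: "j * p' \<le> (n - 1) * q'" by simp
    have "j * p' * q \<le> (n - 1) * q' * q" using mult_right_mono[OF h] q by simp
    moreover have "(n - 1) * q * q' < j * p * q'" using mult_strict_right_mono[OF c(1) q'] .
    ultimately have "j * (p' * q - p * q') < 0" by (simp add: algebra_simps)
    with f jp show False by simp
  qed
  from l u show ?thesis using G_char[OF q', of p' j n] n_def by simp
qed

lemma farey_G_neg:
  fixes q p q' p' u :: int
  assumes q: "q > 0" and q': "q' > 0" and f: "p' * q - p * q' = 1"
    and j: "0 \<le> u" "u < q + q'" and nd: "u = 0 \<or> \<not> q' dvd u"
  shows "G q p (- u) = G q' p' (- u)"
proof (cases "u = 0")
  case True then show ?thesis by (simp add: G_def)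
next
  case False
  with j have up: "u > 0" by simp
  from nd False have nd': "\<not> q' dvd u" by simp
  define n where "n = G q' p' (- u)"
  have c: "(n - 1) * q' < - u * p'" "- u * p' \<le> n * q'" using G_char[OF q', of p' "- u" n] n_def by auto
  have "- u * p' \<noteq> n * q'"
  proof
    assume "- u * p' = n * q'"
    then have "q' dvd u * p'" by (metis dvd_triv_right dvd_minus_iff mult_minus_left)
    then have "q' dvd u" using farey_coprime(2)[OF f] by (simp add: coprime_dvd_mult_left_iff)
    with nd' show False by simp
  qed
  with c have c2: "(- n) * q' < u * p'" by simp
  have u1: "- u * p \<le> n * q"
  proof (rule ccontr)
    assume "\<not> ?thesis"
    then have "u * p < (- n) * q" by simp
    from farey_no_int[OF q q' f up j(2) this c2] show False .
  qed
  have l: "(n - 1) * q < - u * p"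
  proof (rule ccontr)
    assume "\<not> ?thesis"
    then have h: "- u * p \<le> (n - 1) * q" by simp
    have "- u * p * q' \<le> (n - 1) * q * q'" using mult_right_mono[OF h] q' by simp
    moreover have "(n - 1) * q' * q < - u * p' * q" using mult_strict_right_mono[OF c(1) q] .
    ultimately have "u * (p' * q - p * q') < 0" by (simp add: algebra_simps)
    with f up show False by simp
  qed
  from l u1 show ?thesis using G_char[OF q, of p "- u" n] n_def by simp
qed



declare tau.simps[simp del]

lemma tau_base: "a = 1 \<or> a = r - 1 \<Longrightarrow> tau r a i = nat ((int a * int i - 1) mod int r)"
  by (subst tau.simps) auto

lemma tau_rec: "\<not> (a = 1 \<or> a = r - 1 \<or> a = 0 \<or> r \<le> a) \<Longrightarrow> tau r a i =
   (if a \<le> i then tau (r - a) (r mod (r - a)) (i mod (r - a))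
    else (r - a) + tau a (nat ((- int r) mod int a)) i)"
  by (subst tau.simps) (simp del: tau.simps)

lemma rec_params:
  fixes r a :: nat
  assumes "1 < a" "a + 1 < r" "coprime r a"
  shows "1 < r - a" "0 < r mod (r - a)" "r mod (r - a) < r - a" "coprime (r - a) (r mod (r - a))"
    "0 < nat ((- int r) mod int a)" "nat ((- int r) mod int a) < a"
    "coprime a (nat ((- int r) mod int a))"
proof -
  show "1 < r - a" using assms by simp
  show cop1: "coprime (r - a) (r mod (r - a))" using assms
    by (smt (verit) Suc_pred' add.commute add_diff_cancel_left
    add_diff_inverse_nat coprime_commute coprime_mod_right_iff
    less_eq_iff_succ_less less_iff_succ_less_eq less_or_eq_imp_le
    mod_add_self2 order_less_imp_not_less zero_eq_add_iff_both_eq_0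
    zero_less_diff zero_neq_one)
  show "r mod (r - a) < r - a" using assms by simp
  show "0 < r mod (r - a)"
  proof (rule ccontr)
    assume "\<not> ?thesis"
    then have "r mod (r - a) = 0" by simp
    with cop1 have "r - a = 1" by simp
    with assms show False by simp
  qed
  show cop2: "coprime a (nat ((- int r) mod int a))" using assms
    by (smt (verit, best) coprime_commute coprime_int_iff
    coprime_minus_left_iff coprime_mod_left_iff int_nat_eq
    one_of_nat_less_iff pos_mod_bound zmod_zminus1_eq_if)
  show "0 < nat ((- int r) mod int a)"
  proof (rule ccontr)
    assume "\<not> ?thesis"
    then have "nat ((- int r) mod int a) = 0" by simp
    with cop2 have "a = 1" by simp
    with assms show False by simp
  qed
  show "nat ((- int r) mod int a) < a"
    using pos_mod_bound[of "int a" "- int r"] assms by (simp add: nat_less_iff)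
qed

lemma dvd_small_zero:
  fixes n x :: int
  assumes "n dvd x" "\<bar>x\<bar> < n"
  shows "x = 0"
proof (rule ccontr)
  assume "x \<noteq> 0"
  then have "\<bar>n\<bar> \<le> \<bar>x\<bar>" using dvd_imp_le_int assms(1) by blast
  with assms(2) show False by linarith
qed

lemma base_inj:
  fixes r a i j :: nat
  assumes "coprime r a" "i < r" "j < r" "(int a * int i - 1) mod int r = (int a * int j - 1) mod int r"
  shows "i = j"
proof -
  have "int r dvd (int a * int i - 1) - (int a * int j - 1)"
    using assms(4) by (simp add: mod_eq_dvd_iff)
  then have "int r dvd int a * (int i - int j)" by (simp add: algebra_simps)
  moreover have "coprime (int r) (int a)" using assms(1) by simp
  ultimately have d: "int r dvd (int i - int j)" by (simp add: coprime_dvd_mult_right_iff)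
  have "\<bar>int i - int j\<bar> < int r" using assms(2,3) by linarith
  with d have "int i - int j = 0" by (rule dvd_small_zero)
  then show ?thesis by simp
qed

lemma mod_inj_interval:
  fixes i j a n :: nat
  assumes "a \<le> i" "i < a + n" "a \<le> j" "j < a + n" "i mod n = j mod n"
  shows "i = j"
proof -
  have "int n dvd int i - int j" using assms(5)
    by (metis mod_eq_dvd_iff of_nat_mod)
  moreover have "\<bar>int i - int j\<bar> < int n" using assms by linarith
  ultimately have "int i - int j = 0" by (rule dvd_small_zero)
  then show ?thesis by simp
qed

lemma tau_perm:
  "1 < r \<Longrightarrow> 0 < a \<Longrightarrow> a < r \<Longrightarrow> coprime r a \<Longrightarrow>
   (\<forall>i<r. tau r a i < r) \<and> inj_on (tau r a) {..<r}"
proof (induction r arbitrary: a rule: less_induct)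
  case (less r)
  show ?case
  proof (cases "a = 1 \<or> a = r - 1")
    case True
    have rng: "\<forall>i<r. tau r a i < r"
      using True less.prems by (simp add: tau_base nat_less_iff)
    have "inj_on (tau r a) {..<r}"
    proof (rule inj_onI)
      fix i j assume "i \<in> {..<r}" "j \<in> {..<r}" "tau r a i = tau r a j"
      then show "i = j" using True less.prems base_inj[of r a i j]
        by (simp add: tau_base eq_nat_nat_iff)
    qed
    with rng show ?thesis by simp
  next
    case False
    with less.prems have a1: "1 < a" "a + 1 < r" by auto
    note P = rec_params[OF a1 less.prems(4)]
    define rL where "rL = r - a"
    define aL where "aL = r mod (r - a)"
    define aR where "aR = nat ((- int r) mod int a)"
    have IHL: "(\<forall>i<rL. tau rL aL i < rL) \<and> inj_on (tau rL aL) {..<rL}"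
      using less.IH[of rL aL] P a1 unfolding rL_def aL_def by simp
    have IHR: "(\<forall>i<a. tau a aR i < a) \<and> inj_on (tau a aR) {..<a}"
      using less.IH[of a aR] P a1 less.prems unfolding aR_def by simp
    have T: "tau r a i = (if a \<le> i then tau rL aL (i mod rL) else rL + tau a aR i)" for i
      using tau_rec[of a r i] False less.prems unfolding rL_def aL_def aR_def by simp
    have rL: "rL + a = r" "0 < rL" using a1 unfolding rL_def by auto
    have rng: "\<forall>i<r. tau r a i < r"
    proof (intro allI impI)
      fix i assume "i < r"
      show "tau r a i < r"
      proof (cases "a \<le> i")
        case True
        have "tau rL aL (i mod rL) < rL" using IHL rL by simp
        then show ?thesis using T True rL by simp
      next
        case False
        then have "tau a aR i < a" using IHR by simp
        then show ?thesis using T False rL by simp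
      qed
    qed
    have "inj_on (tau r a) {..<r}"
    proof (rule inj_onI)
      fix i j assume i: "i \<in> {..<r}" and j: "j \<in> {..<r}" and e: "tau r a i = tau r a j"
      show "i = j"
      proof (cases "a \<le> i"; cases "a \<le> j")
        assume ai: "a \<le> i" and aj: "a \<le> j"
        then have "tau rL aL (i mod rL) = tau rL aL (j mod rL)" using e T by simp
        then have "i mod rL = j mod rL" using IHL rL by (simp add: inj_on_def)
        then show ?thesis using mod_inj_interval[of a i rL j] ai aj i j rL by simp
      next
        assume ai: "a \<le> i" and aj: "\<not> a \<le> j"
        have "tau rL aL (i mod rL) < rL" using IHL rL by simp
        then show ?thesis using e T ai aj by simp
      next
        assume ai: "\<not> a \<le> i" and aj: "a \<le> j"
        have "tau rL aL (j mod rL) < rL" using IHL rL by simp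
        then show ?thesis using e T ai aj by simp
      next
        assume ai: "\<not> a \<le> i" and aj: "\<not> a \<le> j"
        then have "tau a aR i = tau a aR j" using e T by simp
        then show ?thesis using IHR ai aj by (simp add: inj_on_def)
      qed
    qed
    with rng show ?thesis by simp
  qed
qed

lemma Dl_mod: "q > 0 \<Longrightarrow> Dl q p (x mod q) = Dl q p x"
  using Dl_period[of q p "x mod q" "x div q"] by (simp add: mod_div_mult_eq)

lemma G_rm1: "q > 0 \<Longrightarrow> 0 \<le> t \<Longrightarrow> t < q \<Longrightarrow> G q (q - 1) t = t"
  using G_char[of q "q - 1" t t] by (simp add: algebra_simps)

lemma Dl_rm1: "q > 0 \<Longrightarrow> 0 \<le> t \<Longrightarrow> t + 1 < q \<Longrightarrow> Dl q (q - 1) t = 1"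
  unfolding Dl_def using G_rm1[of q t] G_rm1[of q "t + 1"] by simp

lemma tau_Dl_base:
  fixes r a i :: nat and b :: int
  assumes r: "1 < r" and a: "a = 1 \<or> a = r - 1" and b: "0 < b" "b < int r"
    and ab: "(int a * b) mod int r = 1" and i: "i < r"
  shows "Dl (int r) b (int i - 1) = Dl (int r) b (int (tau r a i))"
proof -
  have rp: "int r > 0" using r by simp
  have "int (tau r a i) = (int a * int i - 1) mod int r"
    using a r by (simp add: tau_base)
  then have e1: "Dl (int r) b (int (tau r a i)) = Dl (int r) b (int a * int i - 1)"
    using Dl_mod[OF rp] by simp
  show ?thesis
  proof (cases "a = 1")
    case True
    then show ?thesis using e1 by simp
  next
    case False
    with a have a': "a = r - 1" by simp
    then have ia: "int a = int r - 1" using r by simp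
    have "(int a * b) mod int r = 1 mod int r" using ab r by simp
    then have d1: "int r dvd int a * b - 1" by (simp add: mod_eq_dvd_iff)
    have "int r dvd (int a * b - 1) - b * int r" by (rule dvd_diff[OF d1]) simp
    moreover have "(int a * b - 1) - b * int r = - (b + 1)" unfolding ia by (simp add: algebra_simps)
    ultimately have "int r dvd - (b + 1)" by metis
    then have "int r dvd (b + 1)" by (simp only: dvd_minus_iff)
    then have "int r dvd (b + 1) - int r" by (simp add: dvd_diff)
    moreover have "\<bar>(b + 1) - int r\<bar> < int r" using b by linarith
    ultimately have "(b + 1) - int r = 0" by (rule dvd_small_zero)
    then have "b + 1 = int r" by simp
    then have bb: "b = int r - 1" by simp
    have e2: "int a * int i - 1 = (- int i - 1) + int i * int r" unfolding ia by (simp add: algebra_simps)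
    have e3: "Dl (int r) b (int a * int i - 1) = Dl (int r) b (- int i - 1)"
      unfolding e2 using Dl_period[OF rp] by simp
    show ?thesis
    proof (cases "i = 0")
      case True
      then show ?thesis using e1 e3 by simp
    next
      case False
      have eq: "(int r - int i - 1) + (-1) * int r = - int i - 1" by simp
      have "Dl (int r) b (- int i - 1) = Dl (int r) b (int r - int i - 1)"
        using Dl_period[OF rp, of b "int r - int i - 1" "-1"] unfolding eq .
      also have "\<dots> = 1" unfolding bb using Dl_rm1[OF rp] False i by simp
      finally have x: "Dl (int r) b (- int i - 1) = 1" .
      have "Dl (int r) b (int i - 1) = 1" unfolding bb using Dl_rm1[OF rp] False i by simp
      with x e1 e3 show ?thesis by simp
    qed
  qed
qed

lemma tau_Dl:
  "1 < r \<Longrightarrow> 0 < a \<Longrightarrow> a < r \<Longrightarrow> coprime r a \<Longrightarrow>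
   \<forall>b::int. 0 < b \<longrightarrow> b < int r \<longrightarrow> (int a * b) mod int r = 1 \<longrightarrow>
     (\<forall>i<r. Dl (int r) b (int i - 1) = Dl (int r) b (int (tau r a i)))"
proof (induction r arbitrary: a rule: less_induct)
  case (less r)
  show ?case
  proof (intro allI impI)
    fix b :: int and i
    assume b0: "0 < b" "b < int r" "(int a * b) mod int r = 1" and i: "i < r"
    show "Dl (int r) b (int i - 1) = Dl (int r) b (int (tau r a i))"
    proof (cases "a = 1 \<or> a = r - 1")
      case True
      then show ?thesis using tau_Dl_base[of r a b i] less.prems b0 i by simp
    next
      case False
      with less.prems have a1: "1 < a" "a + 1 < r" by auto
      note P = rec_params[OF a1 less.prems(4)]
      define rL where "rL = r - a"
      define aL where "aL = r mod (r - a)"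
      define aR where "aR = nat ((- int r) mod int a)"
      have T: "tau r a i = (if a \<le> i then tau rL aL (i mod rL) else rL + tau a aR i)"
        using tau_rec[of a r i] False less.prems unfolding rL_def aL_def aR_def by simp
      have rLi: "int rL = int r - int a" using a1 unfolding rL_def by simp
      have rL1: "1 < rL" using P unfolding rL_def by simp
      have rp: "int r > 0" using a1 by simp
      have ap: "int a > 0" using a1 by simp
      have rLp: "int rL > 0" using rL1 by simp
      define c where "c = (int a * b) div int r"
      have abc: "int a * b = c * int r + 1" using b0(3) div_mult_mod_eq[of "int a * b" "int r"]
        unfolding c_def by simp
      have h: "int a * 1 \<le> int a * b" by (rule mult_left_mono) (use b0(1) in auto)
      have ab2: "int a * b \<ge> 2" using h a1 by linarith
      have c1: "c > 0"
      proof (rule ccontr)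
        assume "\<not> c > 0"
        then have "c * int r \<le> 0" using rp by (simp add: mult_nonpos_nonneg)
        with abc ab2 show False by simp
      qed
      have "int a * b < int a * int r" using b0(2) ap by simp
      then have "c * int r < int a * int r" using abc by simp
      then have ca: "c < int a" using rp by simp
      define bL where "bL = b - c"
      have F1: "bL * int r - b * int rL = 1" unfolding bL_def rLi using abc by (simp add: algebra_simps)
      have F2: "b * int a - c * int r = 1" using abc by (simp add: algebra_simps)
      have bLp: "bL > 0"
      proof -
        have "bL * int r = 1 + b * int rL" using F1 by simp
        moreover have "b * int rL > 0" using b0 rLp by simp
        ultimately have "bL * int r > 0" by simp
        then show ?thesis using rp by (simp add: zero_less_mult_iff)
      qed
      have bLr: "bL < int rL"
      proof -
        have "b * int rL \<le> (int r - 1) * int rL" using b0(2) rLp by (intro mult_right_mono) auto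
        then have "bL * int r \<le> 1 + (int r - 1) * int rL" using F1 by simp
        also have "\<dots> < int rL * int r" using rL1 by (simp add: algebra_simps)
        finally show ?thesis using rp by simp
      qed
      have aLc: "(int aL * bL) mod int rL = 1"
      proof -
        have aLi: "int aL = int r - int rL * int (r div rL)"
          unfolding aL_def rL_def by (simp add: of_nat_mod of_nat_div minus_div_mult_eq_mod [symmetric])
        have "int aL * bL - 1 = int rL * (b - int (r div rL) * bL)"
          unfolding aLi using F1 by (simp add: algebra_simps)
        then have "int rL dvd int aL * bL - 1" by simp
        then have "(int aL * bL) mod int rL = 1 mod int rL" by (simp add: mod_eq_dvd_iff)
        then show ?thesis using rL1 by simp
      qed
      have aRc: "(int aR * c) mod int a = 1"
      proof -
        have aRi: "int aR = - int r - int a * ((- int r) div int a)"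
        proof -
          have m: "int aR = (- int r) mod int a" unfolding aR_def using ap by simp
          show ?thesis unfolding m using minus_mult_div_eq_mod[of "- int r" "int a"] by simp
        qed
        have "int aR * c - 1 = int a * (- b - ((- int r) div int a) * c)"
          unfolding aRi using abc by (simp add: algebra_simps)
        then have "int a dvd int aR * c - 1" by simp
        then have "(int aR * c) mod int a = 1 mod int a" by (simp add: mod_eq_dvd_iff)
        then show ?thesis using a1 by simp
      qed
      have IHL: "\<forall>j<rL. Dl (int rL) bL (int j - 1) = Dl (int rL) bL (int (tau rL aL j))"
        using less.IH[of rL aL] P a1 bLp bLr aLc unfolding rL_def aL_def by simp
      have IHR: "\<forall>j<a. Dl (int a) c (int j - 1) = Dl (int a) c (int (tau a aR j))"
        using less.IH[of a aR] P a1 less.prems c1 ca aRc unfolding aR_def by simp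
      have FL: "G (int r) b j = G (int rL) bL j" if "0 \<le> j" "j < int r" for j
      proof -
        have "j = 0 \<or> \<not> int r dvd j"
          using that zdvd_imp_le[of "int r" j] by auto
        then show ?thesis using farey_G[where q="int r" and p=b and q'="int rL" and p'=bL and j=j] rp rLp F1 that by simp
      qed
      have FR: "G (int a) c j = G (int r) b j" if "0 \<le> j" "j < int a" for j
      proof -
        have "j = 0 \<or> \<not> int a dvd j"
          using that zdvd_imp_le[of "int a" j] by auto
        then show ?thesis using farey_G[where q="int a" and p=c and q'="int r" and p'=b and j=j] rp ap F2 that by simp
      qed
      have FRn: "G (int a) c (- u) = G (int r) b (- u)" if "0 \<le> u" "u \<le> int a" for u
      proof -
        have "u = 0 \<or> \<not> int r dvd u"
          using that zdvd_imp_le[of "int r" u] a1 by auto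
        then show ?thesis using farey_G_neg[where q="int a" and p=c and q'="int r" and p'=b and u=u] rp ap F2 that by simp
      qed
      show ?thesis
      proof (cases "a \<le> i")
        case True
        define i' where "i' = i mod rL"
        define s where "s = tau rL aL i'"
        have i'r: "i' < rL" unfolding i'_def using rL1 by simp
        have sr: "s < rL" unfolding s_def using tau_perm[of rL aL] P i'r unfolding rL_def aL_def by simp
        have Ts: "tau r a i = s" using T True unfolding s_def i'_def by simp
        have e1: "Dl (int r) b (int i - 1) = Dl (int rL) bL (int i - 1)"
          unfolding Dl_def using FL[of "int i"] FL[of "int i - 1"] True a1 i by simp
        have "int i - 1 = (int i' - 1) + int (i div rL) * int rL"
          unfolding i'_def by (simp add: of_nat_mod of_nat_div minus_div_mult_eq_mod [symmetric] algebra_simps)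
        then have e2: "Dl (int rL) bL (int i - 1) = Dl (int rL) bL (int i' - 1)"
          using Dl_period[OF rLp, of bL "int i' - 1" "int (i div rL)"] by metis
        have e3: "Dl (int rL) bL (int i' - 1) = Dl (int rL) bL (int s)"
          using IHL i'r unfolding s_def by simp
        have e4: "Dl (int r) b (int s) = Dl (int rL) bL (int s)"
          unfolding Dl_def using FL[of "int s"] FL[of "int s + 1"] sr rLi a1 by simp
        show ?thesis using e1 e2 e3 e4 Ts by simp
      next
        case False
        define s where "s = tau a aR i"
        have sa: "s < a" unfolding s_def using tau_perm[of a aR] P a1 False unfolding aR_def by simp
        have Ts: "tau r a i = rL + s" using T False unfolding s_def by simp
        have Gm1: "G (int r) b (int i - 1) = G (int a) c (int i - 1)"
        proof (cases "i = 0")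
          case True
          then show ?thesis using FRn[of 1] a1 by simp
        next
          case False
          then show ?thesis using FR[of "int i - 1"] `\<not> a \<le> i` by simp
        qed
        have e1: "Dl (int r) b (int i - 1) = Dl (int a) c (int i - 1)"
          unfolding Dl_def using Gm1 FR[of "int i"] False by simp
        have e2: "Dl (int a) c (int i - 1) = Dl (int a) c (int s)"
          using IHR False unfolding s_def by simp
        have Gs: "G (int r) b (int rL + x) = G (int a) c x + b - c" if "0 \<le> x" "x \<le> int a" for x
        proof -
          have eq: "int rL + x = (x - int a) + 1 * int r" using rLi by simp
          have "G (int r) b (int rL + x) = G (int r) b ((x - int a) + 1 * int r)"
            by (simp only: eq)
          also have "\<dots> = G (int r) b (x - int a) + b" using G_period[OF rp, of b "x - int a" 1] by simp
          also have "G (int r) b (x - int a) = G (int a) c (x - int a)"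
            using FRn[of "int a - x"] that by simp
          also have "G (int a) c (x - int a) = G (int a) c ((x - int a) + 1 * int a) - c"
            using G_period[OF ap, of c "x - int a" 1] by simp
          finally show ?thesis by simp
        qed
        have e3: "Dl (int r) b (int (rL + s)) = Dl (int a) c (int s)"
          unfolding Dl_def using Gs[of "int s"] Gs[of "int s + 1"] sa by (simp add: algebra_simps)
        show ?thesis using e1 e2 e3 Ts by simp
      qed
    qed
  qed
qed



declare tau.simps[simp del]

lemma mult_if01: "(x::rat) * (if P then 1 else 0) = (if P then x else 0)" by simp
lemma mult_if01': "(x::rat) * (if P then 1 else 0) / y = (if P then x / y else 0)" by simp

lemma sum_fun_apply: "(\<Sum>i\<in>A. f i) x = (\<Sum>i\<in>A. f i x)"
  by (induct A rule: infinite_finite_induct) auto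

lemma Zdiv_D: "Zdiv r a i (RayD k) = (if tau r a i < k \<and> k \<le> r then 1 else 0)"
  unfolding Zdiv_def sum_fun_apply Ddiv_def by (simp add: Suc_le_eq)

lemma Zdiv_E: "Zdiv r a i RayE1 = 0"
  unfolding Zdiv_def sum_fun_apply Ddiv_def by simp

lemma DZ_D: "DZdiv r a (RayD k) = (if k \<le> r then of_nat k / of_nat r else 0)"
  unfolding DZdiv_def sum_fun_apply Ddiv_def sdiv_def e3p_def by (simp add: mult_if01')

lemma DZ_E: "DZdiv r a RayE1 = 0"
  unfolding DZdiv_def sum_fun_apply Ddiv_def sdiv_def by simp

lemma X_D: "(\<Sum>i\<in>{0..r}. sdiv (e1p r a i) (Ddiv i)) (RayD k) = (if k \<le> r then e1p r a k else 0)"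
  unfolding sum_fun_apply Ddiv_def sdiv_def by (simp add: mult_if01)

lemma X_E: "(\<Sum>i\<in>{0..r}. sdiv (e1p r a i) (Ddiv i)) RayE1 = 0"
  unfolding sum_fun_apply Ddiv_def sdiv_def by simp



definition bI :: "nat \<Rightarrow> nat \<Rightarrow> int" where "bI r a = int (binv r a mod r)"

definition Sset :: "nat \<Rightarrow> nat \<Rightarrow> nat set" where
  "Sset r a = {i \<in> {..<r}. 1 \<le> (int i * bI r a) mod int r \<and> (int i * bI r a) mod int r \<le> bI r a}"


lemma Dl_S_gen:
  fixes q p t :: int
  assumes q: "q > 0" and p: "0 < p" "p < q"
  shows "Dl q p (t - 1) = (if 1 \<le> (t * p) mod q \<and> (t * p) mod q \<le> p then 1 else 0)"
proof -
  define x where "x = t * p"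
  define k where "k = x div q"
  define m where "m = x mod q"
  have x: "x = k * q + m" unfolding k_def m_def by simp
  have m: "0 \<le> m" "m < q" unfolding m_def using q by auto
  have g1: "G q p t = k + (if m > 0 then 1 else 0)"
  proof -
    have "(k + (if m > 0 then 1 else 0) - 1) * q < t * p \<and> t * p \<le> (k + (if m > 0 then 1 else 0)) * q"
      using x m unfolding x_def[symmetric] by (auto simp: algebra_simps)
    then show ?thesis using G_char[OF q] by blast
  qed
  have g0: "G q p (t - 1) = k + (if m > p then 1 else 0)"
  proof -
    have e: "(t - 1) * p = x - p" unfolding x_def by (simp add: algebra_simps)
    have "(k + (if m > p then 1 else 0) - 1) * q < (t - 1) * p \<and> (t - 1) * p \<le> (k + (if m > p then 1 else 0)) * q"
      unfolding e using x m p by (auto simp: algebra_simps)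
    then show ?thesis using G_char[OF q] by blast
  qed
  show ?thesis unfolding Dl_def using g1 g0 m p unfolding m_def x_def by auto
qed

context
  fixes r a :: nat
  assumes r1: "1 < r" and a0: "0 < a" and ar: "a < r" and cop: "coprime r a"
begin

lemma binv_ok: "(a * binv r a) mod r = 1"
proof -
  obtain x y where "a * x = r * y + gcd a r" using bezout_nat[of a r] a0 by auto
  then have "a * x = r * y + 1" using cop by (simp add: coprime_iff_gcd_eq_1 gcd.commute)
  then have e: "a * x = 1 + r * y" by simp
  have "(a * x) mod r = 1 mod r" unfolding e by (simp only: mod_mult_self2)
  then have "\<exists>b. (a * b) mod r = 1 mod r" by blast
  then have "(a * binv r a) mod r = 1 mod r" unfolding binv_def by (rule someI_ex)
  then show ?thesis using r1 by simp
qed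

lemma b_props: "0 < bI r a" "bI r a < int r" "(int a * bI r a) mod int r = 1"
proof -
  have "(a * (binv r a mod r)) mod r = 1" using binv_ok by (simp add: mod_mult_right_eq)
  then show c: "(int a * bI r a) mod int r = 1" unfolding bI_def
    by (metis of_nat_1 of_nat_mod of_nat_mult)
  show "bI r a < int r" unfolding bI_def using r1 by simp
  show "0 < bI r a"
  proof (rule ccontr)
    assume "\<not> 0 < bI r a"
    then have "bI r a = 0" unfolding bI_def by simp
    with c show False by simp
  qed
qed

lemma modinv_int: "((y mod int r) * bI r a * int a) mod int r = y mod int r"
proof -
  have "((y mod int r) * bI r a * int a) mod int r = (y * (int a * bI r a)) mod int r"
    by (metis mod_mult_left_eq mult.commute mult.left_commute)
  also have "\<dots> = (y * ((int a * bI r a) mod int r)) mod int r" by (metis mod_mult_right_eq)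
  also have "\<dots> = y mod int r" using b_props(3) by simp
  finally show ?thesis .
qed

lemma modinv_int2: "((y mod int r) * int a * bI r a) mod int r = y mod int r"
  using modinv_int[of y] by (simp add: mult.assoc mult.commute mult.left_commute)

lemma M1: "m < r \<Longrightarrow> (int ((m * a) mod r) * bI r a) mod int r = int m"
proof -
  assume m: "m < r"
  have "int ((m * a) mod r) = (int m * int a) mod int r" by (simp add: of_nat_mod)
  then have "(int ((m * a) mod r) * bI r a) mod int r = (((int m * int a) mod int r) * bI r a) mod int r" by simp
  also have "\<dots> = (int m * int a * bI r a) mod int r" by (metis mod_mult_left_eq)
  also have "\<dots> = ((int m mod int r) * int a * bI r a) mod int r" by (metis mod_mult_left_eq)
  also have "\<dots> = int m mod int r" by (rule modinv_int2)
  also have "\<dots> = int m" using m by simp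
  finally show ?thesis .
qed

lemma M2: "x < r \<Longrightarrow> (nat ((int x * bI r a) mod int r) * a) mod r = x"
proof -
  assume x: "x < r"
  have nn: "0 \<le> (int x * bI r a) mod int r" using r1 by simp
  have "int ((nat ((int x * bI r a) mod int r) * a) mod r) = (((int x * bI r a) mod int r) * int a) mod int r"
    using nn by (simp add: of_nat_mod)
  also have "\<dots> = (int x * bI r a * int a) mod int r" by (metis mod_mult_left_eq)
  also have "\<dots> = ((int x mod int r) * bI r a * int a) mod int r" by (metis mod_mult_left_eq)
  also have "\<dots> = int x mod int r" by (rule modinv_int)
  also have "\<dots> = int x" using x by simp
  finally show ?thesis by simp
qed

lemma nb_lt: "nat (bI r a) < r" using b_props by simp

lemma reindexS: "(\<Sum>m\<in>{1..nat (bI r a)}. f ((m * a) mod r)) = (\<Sum>i\<in>Sset r a. f i)"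
proof (rule sum.reindex_bij_witness[where i="\<lambda>x. nat ((int x * bI r a) mod int r)" and j="\<lambda>m. (m * a) mod r"])
  fix m assume m: "m \<in> {1..nat (bI r a)}"
  then have mr: "m < r" using nb_lt by simp
  show "nat ((int ((m * a) mod r) * bI r a) mod int r) = m" using M1[OF mr] by simp
  show "(m * a) mod r \<in> Sset r a" unfolding Sset_def using M1[OF mr] m r1 by auto
next
  fix x assume x: "x \<in> Sset r a"
  then have xr: "x < r" unfolding Sset_def by simp
  show "(nat ((int x * bI r a) mod int r) * a) mod r = x" using M2[OF xr] .
  show "nat ((int x * bI r a) mod int r) \<in> {1..nat (bI r a)}" using x unfolding Sset_def by auto
qed simp

lemma reindexAll: "(\<Sum>m<r. f ((m * a) mod r)) = (\<Sum>i<r. f i)"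
proof (rule sum.reindex_bij_witness[where i="\<lambda>x. nat ((int x * bI r a) mod int r)" and j="\<lambda>m. (m * a) mod r"])
  fix m assume m: "m \<in> {..<r}"
  then have mr: "m < r" by simp
  show "nat ((int ((m * a) mod r) * bI r a) mod int r) = m" using M1[OF mr] by simp
  show "(m * a) mod r \<in> {..<r}" using r1 by simp
next
  fix x assume x: "x \<in> {..<r}"
  then have xr: "x < r" by simp
  show "(nat ((int x * bI r a) mod int r) * a) mod r = x" using M2[OF xr] .
  show "nat ((int x * bI r a) mod int r) \<in> {..<r}" using r1 nat_less_iff by simp
qed simp

lemma tau_image: "tau r a ` {..<r} = {..<r}"
  using tau_perm[OF r1 a0 ar cop] by (intro endo_inj_surj) auto

lemma count_S:
  assumes k: "k \<le> r"
  shows "(\<Sum>i\<in>Sset r a. (if tau r a i < k then 1 else 0 :: int)) = G (int r) (bI r a) (int k)"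
proof -
  let ?b = "bI r a"
  have rp: "int r > 0" using r1 by simp
  have "(\<Sum>i\<in>Sset r a. (if tau r a i < k then 1 else 0 :: int))
      = (\<Sum>i<r. (if 1 \<le> (int i * ?b) mod int r \<and> (int i * ?b) mod int r \<le> ?b
                 then (if tau r a i < k then 1 else 0) else 0))"
    unfolding Sset_def by (rule sum.inter_filter) simp
  also have "\<dots> = (\<Sum>i<r. Dl (int r) ?b (int i - 1) * (if tau r a i < k then 1 else 0))"
    using Dl_S_gen[OF rp b_props(1) b_props(2)] by (intro sum.cong) auto
  also have "\<dots> = (\<Sum>i<r. Dl (int r) ?b (int (tau r a i)) * (if tau r a i < k then 1 else 0))"
    using tau_Dl[OF r1 a0 ar cop] b_props by (intro sum.cong) auto
  also have "\<dots> = (\<Sum>t\<in>tau r a ` {..<r}. Dl (int r) ?b (int t) * (if t < k then 1 else 0))"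
    using tau_perm[OF r1 a0 ar cop] by (subst sum.reindex) auto
  also have "\<dots> = (\<Sum>t<r. Dl (int r) ?b (int t) * (if t < k then 1 else 0))"
    unfolding tau_image ..
  also have "\<dots> = (\<Sum>t\<in>{t\<in>{..<r}. t < k}. Dl (int r) ?b (int t))"
    by (subst sum.inter_filter) (auto intro: sum.cong)
  also have "{t\<in>{..<r}. t < k} = {..<k}" using k by auto
  also have "(\<Sum>t<k. Dl (int r) ?b (int t)) = (\<Sum>t<k. G (int r) ?b (int (Suc t)) - G (int r) ?b (int t))"
    unfolding Dl_def by (simp add: add.commute)
  also have "\<dots> = G (int r) ?b (int k) - G (int r) ?b (int 0)" by (rule sum_lessThan_telescope)
  also have "G (int r) ?b (int 0) = 0" unfolding G_def by simp
  finally show ?thesis by simp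
qed

end



definition Wd :: "nat \<Rightarrow> nat \<Rightarrow> nat \<Rightarrow> qdiv" where
  "Wd r a m = Zdiv r a ((m * a) mod r) - DZdiv r a"

definition nI :: "nat \<Rightarrow> nat \<Rightarrow> nat \<Rightarrow> nat" where
  "nI r a i = nat ((int i * bI r a) mod int r)"

definition Rdef :: "nat \<Rightarrow> nat \<Rightarrow> nat \<Rightarrow> qdiv" where
  "Rdef r a i = (if i < r then (\<Sum>m\<in>{1..nI r a i}. Wd r a m) else 0)"

context
  fixes r a :: nat
  assumes r1: "1 < r" and a0: "0 < a" and ar: "a < r" and cop: "coprime r a"
begin

lemma count_all:
  assumes k: "k \<le> r"
  shows "(\<Sum>i<r. (if tau r a i < k then 1 else 0 :: rat)) = of_nat k"
proof -
  have "(\<Sum>i<r. (if tau r a i < k then 1 else 0 :: rat)) = (\<Sum>t\<in>tau r a ` {..<r}. (if t < k then 1 else 0 :: rat))"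
    using tau_perm[OF r1 a0 ar cop] by (subst sum.reindex) auto
  also have "\<dots> = (\<Sum>t<r. (if t < k then 1 else 0 :: rat))" unfolding tau_image[OF r1 a0 ar cop] ..
  also have "\<dots> = (\<Sum>t\<in>{t\<in>{..<r}. t < k}. 1)" by (subst sum.inter_filter) auto
  also have "{t\<in>{..<r}. t < k} = {..<k}" using k by auto
  finally show ?thesis by simp
qed

lemma cycle: "(\<Sum>m<r. Wd r a m) = 0"
proof (rule ext)
  fix \<rho>
  have "(\<Sum>m<r. Wd r a m) \<rho> = (\<Sum>m<r. (\<lambda>i. Zdiv r a i \<rho> - DZdiv r a \<rho>) ((m * a) mod r))"
    unfolding sum_fun_apply Wd_def by simp
  also have "\<dots> = (\<Sum>i<r. Zdiv r a i \<rho> - DZdiv r a \<rho>)" by (rule reindexAll[OF r1 a0 ar cop])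
  also have "\<dots> = 0"
  proof (cases \<rho>)
    case RayE1
    then show ?thesis by (simp add: Zdiv_E DZ_E)
  next
    case (RayD k)
    show ?thesis
    proof (cases "k \<le> r")
      case True
      have "(\<Sum>i<r. Zdiv r a i \<rho> - DZdiv r a \<rho>) = (\<Sum>i<r. (if tau r a i < k then 1 else 0 :: rat)) - of_nat r * (of_nat k / of_nat r)"
        unfolding RayD Zdiv_D DZ_D using True by (simp add: sum_subtractf)
      also have "\<dots> = 0" using count_all[OF True] r1 by simp
      finally show ?thesis .
    next
      case False
      then show ?thesis unfolding RayD Zdiv_D DZ_D by simp
    qed
  qed
  finally show "(\<Sum>m<r. Wd r a m) \<rho> = 0 \<rho>" by simp
qed

lemma nI_lt: "nI r a i < r"
  unfolding nI_def using r1 by (simp add: nat_less_iff)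

lemma nI_a: "i < r \<Longrightarrow> (nI r a i * a) mod r = i"
  unfolding nI_def by (rule M2[OF r1 a0 ar cop])

lemma nI_0: "nI r a 0 = 0" unfolding nI_def by simp

lemma nI_zero: "i < r \<Longrightarrow> nI r a i = 0 \<Longrightarrow> i = 0"
  using nI_a[of i] by simp

lemma nI_prev:
  assumes i: "i < r"
  shows "nI r a ((i + r - a) mod r) = (if 1 \<le> nI r a i then nI r a i - 1 else r - 1)"
proof -
  let ?b = "bI r a"
  have e1: "int ((i + r - a) mod r) = (int i - int a) mod int r"
  proof -
    have "int ((i + r - a) mod r) = (int i - int a + 1 * int r) mod int r"
      using ar by (simp add: of_nat_mod of_nat_diff algebra_simps)
    also have "\<dots> = (int i - int a) mod int r" by simp
    finally show ?thesis .
  qed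
  have "(int ((i + r - a) mod r) * ?b) mod int r = ((int i - int a) * ?b) mod int r"
    unfolding e1 by (metis mod_mult_left_eq)
  also have "\<dots> = (int i * ?b - int a * ?b) mod int r" by (simp add: algebra_simps)
  also have "\<dots> = ((int i * ?b) mod int r - (int a * ?b) mod int r) mod int r"
    by (metis mod_diff_eq)
  also have "\<dots> = (int (nI r a i) - 1) mod int r"
    unfolding nI_def using b_props(3)[OF r1 a0 ar cop] r1 by simp
  finally have e2: "(int ((i + r - a) mod r) * ?b) mod int r = (int (nI r a i) - 1) mod int r" .
  show ?thesis
  proof (cases "1 \<le> nI r a i")
    case True
    have "(int (nI r a i) - 1) mod int r = int (nI r a i) - 1"
      using True nI_lt[of i] by (intro mod_pos_pos_trivial) auto
    then show ?thesis using e2 True unfolding nI_def[of r a "(i + r - a) mod r"] by simp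
  next
    case False
    then have "nI r a i = 0" by simp
    then have "(int (nI r a i) - 1) mod int r = int r - 1"
      using r1 by (simp add: zmod_zminus1_eq_if)
    then show ?thesis using e2 False unfolding nI_def[of r a "(i + r - a) mod r"] by simp
  qed
qed

lemma Rdef_exists: "Rcond r a (Rdef r a)"
  unfolding Rcond_def
proof (intro conjI allI impI)
  show "Rdef r a 0 = 0" unfolding Rdef_def using r1 nI_0 by simp
next
  fix i :: nat assume "r \<le> i" then show "Rdef r a i = 0" unfolding Rdef_def by simp
next
  fix i :: nat assume i: "i < r"
  show "is_qdiv r (Rdef r a i)" unfolding is_qdiv_def
  proof (intro allI impI)
    fix k assume "r < k"
    then show "Rdef r a i (RayD k) = 0" unfolding Rdef_def sum_fun_apply Wd_def
      by (simp add: Zdiv_D DZ_D)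
  qed
next
  fix i :: nat assume i: "i < r"
  let ?n = "nI r a i"
  let ?i' = "(i + r - a) mod r"
  have i'r: "?i' < r" using r1 by simp
  show "Zdiv r a i = DZdiv r a + Rdef r a i - Rdef r a ?i'"
  proof (cases "1 \<le> ?n")
    case True
    then obtain n0 where n0: "?n = Suc n0" by (cases ?n) auto
    have p: "nI r a ?i' = n0" using nI_prev[OF i] True n0 by simp
    have "Rdef r a i = (\<Sum>m\<in>{1..n0}. Wd r a m) + Wd r a (Suc n0)"
      unfolding Rdef_def using i n0 by (simp add: sum.cl_ivl_Suc)
    moreover have "Rdef r a ?i' = (\<Sum>m\<in>{1..n0}. Wd r a m)"
      unfolding Rdef_def using i'r p by simp
    moreover have "Wd r a (Suc n0) = Zdiv r a i - DZdiv r a"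
      unfolding Wd_def using nI_a[OF i] n0 by simp
    ultimately show ?thesis by (simp add: algebra_simps)
  next
    case False
    then have n0: "?n = 0" by simp
    then have i0: "i = 0" using nI_zero[OF i] by simp
    have p: "nI r a ?i' = r - 1" using nI_prev[OF i] False by simp
    have R0: "Rdef r a i = 0" unfolding Rdef_def using i n0 by simp
    have Ri': "Rdef r a ?i' = (\<Sum>m\<in>{1..r - 1}. Wd r a m)"
      unfolding Rdef_def using i'r p by simp
    have "{..<r} = insert 0 {1..r - 1}" using r1 by auto
    then have "(\<Sum>m<r. Wd r a m) = Wd r a 0 + (\<Sum>m\<in>{1..r - 1}. Wd r a m)" by simp
    then have "Wd r a 0 + (\<Sum>m\<in>{1..r - 1}. Wd r a m) = 0" using cycle by simp
    moreover have "Wd r a 0 = Zdiv r a 0 - DZdiv r a" unfolding Wd_def by simp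
    ultimately show ?thesis using R0 Ri' i0 by (simp add: algebra_simps eq_neg_iff_add_eq_0 add.commute)
  qed
qed

lemma Rcond_unique:
  assumes R: "Rcond r a R" and R': "Rcond r a R'"
  shows "R = R'"
proof -
  have step: "R ((m * a) mod r) = R' ((m * a) mod r)" for m
  proof (induction m)
    case 0
    then show ?case using R R' unfolding Rcond_def by simp
  next
    case (Suc m)
    define j where "j = (Suc m * a) mod r"
    have jr: "j < r" unfolding j_def using r1 by simp
    have "int ((j + r - a) mod r) = (int j - int a + 1 * int r) mod int r"
      using ar jr by (simp add: of_nat_mod of_nat_diff algebra_simps)
    also have "\<dots> = (int j - int a) mod int r" by simp
    also have "\<dots> = ((int (Suc m) * int a) mod int r - int a) mod int r"
      unfolding j_def by (simp add: of_nat_mod algebra_simps)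
    also have "\<dots> = (int (Suc m) * int a - int a) mod int r" by (metis mod_diff_left_eq)
    also have "\<dots> = int ((m * a) mod r)" by (simp add: of_nat_mod algebra_simps)
    finally have pj: "(j + r - a) mod r = (m * a) mod r" by simp
    have "Zdiv r a j = DZdiv r a + R j - R ((m * a) mod r)"
      using R jr pj unfolding Rcond_def by metis
    moreover have "Zdiv r a j = DZdiv r a + R' j - R' ((m * a) mod r)"
      using R' jr pj unfolding Rcond_def by metis
    ultimately have "R j = R' j" using Suc.IH by (simp add: algebra_simps)
    then show ?case unfolding j_def .
  qed
  show ?thesis
  proof (rule ext)
    fix i show "R i = R' i"
    proof (cases "i < r")
      case True
      then show ?thesis using step[of "nI r a i"] nI_a[OF True] by simp
    next
      case False
      then show ?thesis using R R' unfolding Rcond_def by simp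
    qed
  qed
qed

lemma e1p_G: "e1p r a k = of_int (G (int r) (bI r a) (int k)) - of_int (bI r a) * of_nat k / of_nat r"
proof -
  let ?b = "bI r a"
  have "(- int k * int (binv r a)) mod int r = (- int k * (int (binv r a) mod int r)) mod int r"
    by (metis mod_mult_right_eq)
  also have "\<dots> = (- int k * ?b) mod int r" unfolding bI_def by (simp add: of_nat_mod)
  also have "\<dots> = - int k * ?b - int r * ((- int k * ?b) div int r)"
    by (metis minus_mult_div_eq_mod)
  also have "\<dots> = - int k * ?b + int r * G (int r) ?b (int k)" unfolding G_def by simp
  finally have e: "(- int k * int (binv r a)) mod int r = - int k * ?b + int r * G (int r) ?b (int k)" .
  have rne: "(of_nat r :: rat) \<noteq> 0" using r1 by simp
  show ?thesis unfolding e1p_def e using rne by (simp add: field_simps)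
qed

lemma Rdef_1: "Rdef r a 1 = (\<Sum>i\<in>{0..r}. sdiv (e1p r a i) (Ddiv i))"
proof (rule ext)
  fix \<rho>
  let ?b = "bI r a"
  have bp: "0 < ?b" "?b < int r" using b_props[OF r1 a0 ar cop] by auto
  have n1: "nI r a 1 = nat ?b" unfolding nI_def using bp by simp
  have R1: "Rdef r a 1 = (\<Sum>m\<in>{1..nat ?b}. Wd r a m)" unfolding Rdef_def n1 using r1 by simp
  show "Rdef r a 1 \<rho> = (\<Sum>i\<in>{0..r}. sdiv (e1p r a i) (Ddiv i)) \<rho>"
  proof (cases \<rho>)
    case RayE1
    then show ?thesis unfolding R1 sum_fun_apply Wd_def by (simp add: Zdiv_E DZ_E X_E[unfolded sum_fun_apply])
  next
    case (RayD k)
    show ?thesis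
    proof (cases "k \<le> r")
      case False
      then show ?thesis unfolding RayD R1 sum_fun_apply Wd_def X_D[unfolded sum_fun_apply]
        by (simp add: Zdiv_D DZ_D)
    next
      case True
      have cnt: "(\<Sum>m\<in>{1..nat ?b}. (if tau r a ((m * a) mod r) < k then 1 else 0 :: rat))
                 = of_int (G (int r) ?b (int k))"
      proof -
        have "(\<Sum>m\<in>{1..nat ?b}. (\<lambda>i. if tau r a i < k then 1 else 0 :: rat) ((m * a) mod r))
              = (\<Sum>i\<in>Sset r a. (if tau r a i < k then 1 else 0 :: rat))"
          by (rule reindexS[OF r1 a0 ar cop])
        also have "\<dots> = of_int (\<Sum>i\<in>Sset r a. (if tau r a i < k then 1 else 0 :: int))"
          unfolding of_int_sum by (intro sum.cong) auto
        also have "\<dots> = of_int (G (int r) ?b (int k))" using count_S[OF r1 a0 ar cop True] by simp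
        finally show ?thesis by simp
      qed
      have "Rdef r a 1 \<rho> = (\<Sum>m\<in>{1..nat ?b}. (if tau r a ((m * a) mod r) < k then 1 else 0 :: rat))
                 - of_nat (nat ?b) * (of_nat k / of_nat r)"
        unfolding RayD R1 sum_fun_apply Wd_def using True by (simp add: Zdiv_D DZ_D sum_subtractf)
      also have "\<dots> = of_int (G (int r) ?b (int k)) - of_int ?b * of_nat k / of_nat r"
        unfolding cnt using bp by simp
      also have "\<dots> = e1p r a k" using e1p_G by simp
      also have "\<dots> = (\<Sum>i\<in>{0..r}. sdiv (e1p r a i) (Ddiv i)) \<rho>"
        unfolding RayD using X_D[of r a k] True by simp
      finally show ?thesis .
    qed
  qed
qed

end

theorem mainTheorem6:
  fixes r a :: nat
  assumes "1 < r" and "0 < a" and "a < r" and "coprime r a"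
  shows "(\<exists>!R. Rcond r a R) \<and>
    (\<forall>R. Rcond r a R \<longrightarrow>
       R 1 = DXdiv r a - E1div \<and> R 1 = (\<Sum>i\<in>{0..r}. sdiv (e1p r a i) (Ddiv i)))"
proof
  show "\<exists>!R. Rcond r a R"
    using Rdef_exists[OF assms] Rcond_unique[OF assms] by blast
next
  show "\<forall>R. Rcond r a R \<longrightarrow>
       R 1 = DXdiv r a - E1div \<and> R 1 = (\<Sum>i\<in>{0..r}. sdiv (e1p r a i) (Ddiv i))"
  proof (intro allI impI)
    fix R assume R: "Rcond r a R"
    then have "R = Rdef r a" using Rcond_unique[OF assms] Rdef_exists[OF assms] by blast
    then have e: "R 1 = (\<Sum>i\<in>{0..r}. sdiv (e1p r a i) (Ddiv i))" using Rdef_1[OF assms] by simp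
    have "DXdiv r a - E1div = (\<Sum>i\<in>{0..r}. sdiv (e1p r a i) (Ddiv i))" unfolding DXdiv_def by simp
    with e show "R 1 = DXdiv r a - E1div \<and> R 1 = (\<Sum>i\<in>{0..r}. sdiv (e1p r a i) (Ddiv i))" by simp
  qed
qed


end
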